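(* Consider the discrete-time system with sensor and actuator attacks described in the context. Let $q_1,q_2$ be the largest integers such that for every $J_u\subset\{1,\dots,n_u\}$ with $\card(J_u)\le 2q_1<n_u$ and every $J_s\subset\{1,\dots,n_y\}$ with $\card(J_s)\ge n_y-2q_2>0$ a partial UIO for the pair $(J_u,J_s)$ exists, and suppose $\card(W_u)\le q_1<\frac{n_u}{2}$ and $\card(W_y)\le q_2<\frac{n_y}{2}$. Run a partial UIO $\hat x_{J_{us}}$ for each pair $(J_u,J_s)$ with $\card(J_u)=q_1$, $\card(J_s)=n_y-q_2$, and a partial UIO $\hat x_{S_{us}}$ for each pair $(S_u,S_s)$ with $\card(S_u)=2q_1$, $\card(S_s)=n_y-2q_2$. For $k\ge0$ and each such $(J_u,J_s)$ define $$\pi_{J_{us}}(k)=\max_{S_u\supset J_u,\ \card(S_u)=2q_1;\ S_s\subset J_s,\ \card(S_s)=n_y-2q_2}|\hat x_{J_{us}}(k)-\hat x_{S_{us}}(k)|,$$ let $(\sigma_u(k),\sigma_s(k))$ be a minimizer of $\pi_{J_{us}}(k)$ over all pairs $(J_u,J_s)$ with $\card(J_u)=q_1$, $\card(J_s)=n_y-q_2$, and set $\hat x(k)=\hat x_{\sigma_{us}(k)}(k)$, the estimate of the partial UIO indexed by $(\sigma_u(k),\sigma_s(k))$. Define $e(k)=\hat x_{\sigma_{us}(k)}(k)-x(k)$. Then there exists a class-$\mathcal{KL}$ function $\bar\beta$ such that $$|e(k)|\le\bar\beta(e_0,k)\quad\text{for all }k\ge0,\qquad e_0:=\max_{(J_u,J_s),(S_u,S_s)}\{|e_{J_{us}}(0)|,|e_{S_{us}}(0)|\},$$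 the maximum being over all pairs of the two kinds above, with $e_{J_{us}}=\hat x_{J_{us}}-x$, $e_{S_{us}}=\hat x_{S_{us}}-x$.
   Context: System: $x(k+1)=f(x(k))+B(u(k)+a_u(k))$, $y(k)=h(x(k))+a_y(k)$, $k\in\mathbb{N}$, with state $x\in\mathbb{R}^n$, known input $u\in\mathbb{R}^{n_u}$, actuator attack $a_u=(a_{u1},\dots,a_{un_u})^\top$, output $y\in\mathbb{R}^{n_y}$, sensor attack $a_y=(a_{y1},\dots,a_{yn_y})^\top$ (attacks may be arbitrarily large), $f:\mathbb{R}^n\to\mathbb{R}^n$, $h:\mathbb{R}^n\to\mathbb{R}^{n_y}$, $B=[b_1,\dots,b_{n_u}]\in\mathbb{R}^{n\times n_u}$ of full column rank. Attacked sets: $W_u=\{i:a_{ui}(k)\ne0\text{ for some }k\ge0\}$, $W_y=\{i:a_{yi}(k)\ne0\text{ for some }k\ge0\}$ (unknown, time-invariant), so $\supp(a_u(k))\subseteq W_u$, $\supp(a_y(k))\subseteq W_y$ for all $k$. For index sets $J$, $y^J,a_y^J,a_u^J$ denote subvectors indexed by $J$ and $b_J$ the matrix with columns $b_i$, $i\in J$. A partial UIO for the pair $(J_u,J_s)$ (an unknown input observer for $x(k+1)=f(x)+Bu+b_{J_u}a_u^{J_u}$, $y^{J_s}=h^{J_s}(x)+a_y^{J_s}$ with unknown input $a_u^{J_u}$) is a system $\hat x_{J_{us}}(k+1)=f_{J_{us}}(\hat x_{J_{us}}(k),u(k),y^{J_s}(k),y^{J_s}(k+1))$, $f_{J_{us}}:\mathbb{R}^n\times\mathbb{R}^{n_u}\times\mathbb{R}^{\card(J_s)}\times\mathbb{R}^{\card(J_s)}\to\mathbb{R}^n$,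 such that, with $e_{J_{us}}=\hat x_{J_{us}}-x$, there is a class-$\mathcal{KL}$ function $\beta_{J_{us}}$ with $|e_{J_{us}}(k)|\le\beta_{J_{us}}(|e_{J_{us}}(0)|,k)$ for all $k\ge0$, for all initial conditions $x(0),\hat x_{J_{us}}(0)$ and known inputs, whenever $W_u\subseteq J_u$ and $a_y^{J_s}(k)=0$ for all $k\ge0$. $|\cdot|$ is the Euclidean norm. *)

theory Defs
  imports "HOL-Analysis.Analysis"
begin

(* Vectors in R^{n_u}, R^{n_y} (and attacks) are modelled as nat => real, with only the
   components 0..n_u-1 (resp. 0..n_y-1) being meaningful.  Index i corresponds to the
   paper's index i+1.  The state space R^n is an arbitrary euclidean_space 'x. *)

definition class_K :: "(real \<Rightarrow> real) \<Rightarrow> bool" where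
  "class_K \<alpha> \<longleftrightarrow> continuous_on {0..} \<alpha> \<and> \<alpha> 0 = 0 \<and> strict_mono_on {0..} \<alpha>"

definition class_KL :: "(real \<Rightarrow> nat \<Rightarrow> real) \<Rightarrow> bool" where
  "class_KL \<beta> \<longleftrightarrow>
     (\<forall>t. class_K (\<lambda>r. \<beta> r t)) \<and>
     (\<forall>r\<ge>0. (\<forall>s t. s \<le> t \<longrightarrow> \<beta> r t \<le> \<beta> r s) \<and> (\<beta> r \<longlonglongrightarrow> 0))"

definition restr :: "nat set \<Rightarrow> (nat \<Rightarrow> real) \<Rightarrow> (nat \<Rightarrow> real)" where
  "restr J v = (\<lambda>i. if i \<in> J then v i else 0)"

definition Bmul :: "(nat \<Rightarrow> 'x::real_vector) \<Rightarrow> nat \<Rightarrow> (nat \<Rightarrow> real) \<Rightarrow> 'x" where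
  "Bmul b nu v = (\<Sum>i<nu. v i *\<^sub>R b i)"

definition full_col_rank :: "(nat \<Rightarrow> 'x::real_vector) \<Rightarrow> nat \<Rightarrow> bool" where
  "full_col_rank b nu \<longleftrightarrow> (\<forall>c. Bmul b nu c = 0 \<longrightarrow> (\<forall>i<nu. c i = 0))"

definition sys_output :: "('x \<Rightarrow> nat \<Rightarrow> real) \<Rightarrow> (nat \<Rightarrow> 'x) \<Rightarrow> (nat \<Rightarrow> nat \<Rightarrow> real) \<Rightarrow> nat \<Rightarrow> nat \<Rightarrow> real" where
  "sys_output h x ay k = (\<lambda>i. h (x k) i + ay k i)"

definition system_traj :: "('x::real_vector \<Rightarrow> 'x) \<Rightarrow> (nat \<Rightarrow> 'x) \<Rightarrow> nat \<Rightarrow> (nat \<Rightarrow> 'x)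
    \<Rightarrow> (nat \<Rightarrow> nat \<Rightarrow> real) \<Rightarrow> (nat \<Rightarrow> nat \<Rightarrow> real) \<Rightarrow> bool" where
  "system_traj f b nu x u au \<longleftrightarrow> (\<forall>k. x (Suc k) = f (x k) + Bmul b nu (\<lambda>i. u k i + au k i))"

(* observer update map: (xhat(k), u(k), y^{Js}(k), y^{Js}(k+1)) |-> xhat(k+1) *)
type_synonym 'x obs_map = "'x \<Rightarrow> (nat \<Rightarrow> real) \<Rightarrow> (nat \<Rightarrow> real) \<Rightarrow> (nat \<Rightarrow> real) \<Rightarrow> 'x"

primrec run_obs :: "'x obs_map \<Rightarrow> 'x \<Rightarrow> (nat \<Rightarrow> nat \<Rightarrow> real) \<Rightarrow> (nat \<Rightarrow> nat \<Rightarrow> real)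
    \<Rightarrow> nat set \<Rightarrow> nat \<Rightarrow> 'x" where
  "run_obs F x0 u y Js 0 = x0"
| "run_obs F x0 u y Js (Suc k) =
     F (run_obs F x0 u y Js k) (u k) (restr Js (y k)) (restr Js (y (Suc k)))"

definition Wset :: "nat \<Rightarrow> (nat \<Rightarrow> nat \<Rightarrow> real) \<Rightarrow> nat set" where
  "Wset m a = {i. i < m \<and> (\<exists>k. a k i \<noteq> 0)}"

definition partial_UIO :: "('x::euclidean_space \<Rightarrow> 'x) \<Rightarrow> ('x \<Rightarrow> nat \<Rightarrow> real) \<Rightarrow> (nat \<Rightarrow> 'x)
    \<Rightarrow> nat \<Rightarrow> nat set \<Rightarrow> nat set \<Rightarrow> 'x obs_map \<Rightarrow> bool" where
  "partial_UIO f h b nu Ju Js F \<longleftrightarrow>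
     (\<exists>\<beta>. class_KL \<beta> \<and>
       (\<forall>x u au ay x0. system_traj f b nu x u au \<longrightarrow> Wset nu au \<subseteq> Ju \<longrightarrow>
          (\<forall>k. \<forall>i\<in>Js. ay k i = 0) \<longrightarrow>
          (\<forall>k. norm (run_obs F x0 u (sys_output h x ay) Js k - x k) \<le> \<beta> (norm (x0 - x 0)) k)))"

definition Jpairs :: "nat \<Rightarrow> nat \<Rightarrow> nat \<Rightarrow> nat \<Rightarrow> (nat set \<times> nat set) set" where
  "Jpairs nu ny q1 q2 = {(Ju, Js). Ju \<subseteq> {..<nu} \<and> card Ju = q1 \<and> Js \<subseteq> {..<ny} \<and> card Js = ny - q2}"

definition Spairs :: "nat \<Rightarrow> nat \<Rightarrow> nat \<Rightarrow> nat \<Rightarrow> (nat set \<times> nat set) set" where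
  "Spairs nu ny q1 q2 = {(Su, Ss). Su \<subseteq> {..<nu} \<and> card Su = 2 * q1 \<and> Ss \<subseteq> {..<ny} \<and> card Ss = ny - 2 * q2}"

definition pi_J :: "(nat set \<Rightarrow> nat set \<Rightarrow> nat \<Rightarrow> 'x::real_normed_vector)
    \<Rightarrow> (nat set \<Rightarrow> nat set \<Rightarrow> nat \<Rightarrow> 'x) \<Rightarrow> nat \<Rightarrow> nat \<Rightarrow> nat \<Rightarrow> nat \<Rightarrow> nat set \<Rightarrow> nat set \<Rightarrow> nat \<Rightarrow> real" where
  "pi_J xJ xS nu ny q1 q2 Ju Js k =
     Max {norm (xJ Ju Js k - xS Su Ss k) | Su Ss.
            (Su, Ss) \<in> Spairs nu ny q1 q2 \<and> Ju \<subseteq> Su \<and> Ss \<subseteq> Js}"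

end

theory Submission
  imports Defs
begin


lemma extend_card:
  assumes "finite U" "A \<subseteq> U" "card A \<le> m" "m \<le> card U"
  shows "\<exists>B. A \<subseteq> B \<and> B \<subseteq> U \<and> card B = m"
proof -
  have fA: "finite A" using assms finite_subset by blast
  have "card (U - A) = card U - card A" using assms fA by (simp add: card_Diff_subset)
  then have "m - card A \<le> card (U - A)" using assms by linarith
  then obtain T where T: "T \<subseteq> U - A" "card T = m - card A" "finite T"
    by (rule obtain_subset_with_card_n)
  have "card (A \<union> T) = card A + card T"
    using T fA by (intro card_Un_disjoint) auto
  then show ?thesis using T assms by (intro exI[of _ "A \<union> T"]) auto
qed

lemma class_K_mono:
  assumes "class_K g" "0 \<le> r" "r \<le> s"
  shows "g r \<le> g s"
proof (cases "r = s")
  case False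
  then have "r < s" using assms by simp
  then show ?thesis using assms strict_mono_onD[of "{0..}" g r s]
    unfolding class_K_def by auto
qed simp

lemma class_K_nonneg:
  assumes "class_K g" "0 \<le> r"
  shows "0 \<le> g r"
  using class_K_mono[OF assms(1) order_refl assms(2)] assms(1) unfolding class_K_def by simp

lemma KL_K: "class_KL \<beta> \<Longrightarrow> class_K (\<lambda>r. \<beta> r t)"
  unfolding class_KL_def by blast

lemma KL_mono: "class_KL \<beta> \<Longrightarrow> 0 \<le> r \<Longrightarrow> r \<le> s \<Longrightarrow> \<beta> r t \<le> \<beta> s t"
  using class_K_mono[OF KL_K] by blast

lemma KL_nonneg: "class_KL \<beta> \<Longrightarrow> 0 \<le> r \<Longrightarrow> 0 \<le> \<beta> r t"
  using class_K_nonneg[OF KL_K] by blast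

lemma KL_dec: "class_KL \<beta> \<Longrightarrow> 0 \<le> r \<Longrightarrow> s \<le> t \<Longrightarrow> \<beta> r t \<le> \<beta> r s"
  unfolding class_KL_def by blast

lemma KL_lim: "class_KL \<beta> \<Longrightarrow> 0 \<le> r \<Longrightarrow> (\<beta> r \<longlonglongrightarrow> 0)"
  unfolding class_KL_def by blast

lemma KL_sum:
  assumes fA: "finite A" and fB: "finite B"
    and KA: "\<forall>p\<in>A. class_KL (BA p)" and KB: "\<forall>p\<in>B. class_KL (BB p)"
  shows "class_KL (\<lambda>r k. 3 * ((\<Sum>p\<in>A. BA p r k) + (\<Sum>p\<in>B. BB p r k)) + r * inverse (real (Suc k)))"
  unfolding class_KL_def
proof (intro conjI allI impI)
  fix t
  show "class_K (\<lambda>r. 3 * ((\<Sum>p\<in>A. BA p r t) + (\<Sum>p\<in>B. BB p r t)) + r * inverse (real (Suc t)))"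
    unfolding class_K_def
  proof (intro conjI)
    have cA: "\<And>p. p \<in> A \<Longrightarrow> continuous_on {0..} (\<lambda>r. BA p r t)"
      using KA KL_K unfolding class_K_def by blast
    have cB: "\<And>p. p \<in> B \<Longrightarrow> continuous_on {0..} (\<lambda>r. BB p r t)"
      using KB KL_K unfolding class_K_def by blast
    show "continuous_on {0..} (\<lambda>r. 3 * ((\<Sum>p\<in>A. BA p r t) + (\<Sum>p\<in>B. BB p r t)) + r * inverse (real (Suc t)))"
      by (intro continuous_intros cA cB)
    have "\<forall>p\<in>A. BA p 0 t = 0" using KA KL_K unfolding class_K_def by blast
    moreover have "\<forall>p\<in>B. BB p 0 t = 0" using KB KL_K unfolding class_K_def by blast
    ultimately show "3 * ((\<Sum>p\<in>A. BA p 0 t) + (\<Sum>p\<in>B. BB p 0 t)) + 0 * inverse (real (Suc t)) = 0"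
      by simp
    show "strict_mono_on {0..} (\<lambda>r. 3 * ((\<Sum>p\<in>A. BA p r t) + (\<Sum>p\<in>B. BB p r t)) + r * inverse (real (Suc t)))"
    proof (rule strict_mono_onI)
      fix r s :: real assume rs: "r \<in> {0..}" "s \<in> {0..}" "r < s"
      have "(\<Sum>p\<in>A. BA p r t) \<le> (\<Sum>p\<in>A. BA p s t)"
        using KA KL_mono rs by (intro sum_mono) auto
      moreover have "(\<Sum>p\<in>B. BB p r t) \<le> (\<Sum>p\<in>B. BB p s t)"
        using KB KL_mono rs by (intro sum_mono) auto
      moreover have "r * inverse (real (Suc t)) < s * inverse (real (Suc t))"
        using rs by (intro mult_strict_right_mono) auto
      ultimately show "3 * ((\<Sum>p\<in>A. BA p r t) + (\<Sum>p\<in>B. BB p r t)) + r * inverse (real (Suc t))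
          < 3 * ((\<Sum>p\<in>A. BA p s t) + (\<Sum>p\<in>B. BB p s t)) + s * inverse (real (Suc t))"
        by (smt (verit))
    qed
  qed
next
  fix r :: real and s t :: nat assume r: "0 \<le> r" and st: "s \<le> t"
    have "(\<Sum>p\<in>A. BA p r t) \<le> (\<Sum>p\<in>A. BA p r s)"
      using KA KL_dec r st by (intro sum_mono) auto
    moreover have "(\<Sum>p\<in>B. BB p r t) \<le> (\<Sum>p\<in>B. BB p r s)"
      using KB KL_dec r st by (intro sum_mono) auto
    moreover have "r * inverse (real (Suc t)) \<le> r * inverse (real (Suc s))"
      using r st by (intro mult_left_mono) (auto simp: field_simps)
    ultimately show "3 * ((\<Sum>p\<in>A. BA p r t) + (\<Sum>p\<in>B. BB p r t)) + r * inverse (real (Suc t))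
      \<le> 3 * ((\<Sum>p\<in>A. BA p r s) + (\<Sum>p\<in>B. BB p r s)) + r * inverse (real (Suc s))"
      by (smt (verit))
next
  fix r :: real assume r: "0 \<le> r"
  have lA: "\<And>p. p \<in> A \<Longrightarrow> BA p r \<longlonglongrightarrow> 0" using KA KL_lim r by blast
  have lB: "\<And>p. p \<in> B \<Longrightarrow> BB p r \<longlonglongrightarrow> 0" using KB KL_lim r by blast
  have "(\<lambda>k. 3 * ((\<Sum>p\<in>A. BA p r k) + (\<Sum>p\<in>B. BB p r k)) + r * inverse (real (Suc k)))
      \<longlonglongrightarrow> 3 * ((\<Sum>p\<in>A. 0) + (\<Sum>p\<in>B. 0)) + r * 0"
    by (intro tendsto_intros lA lB LIMSEQ_inverse_real_of_nat)
  then show "(\<lambda>k. 3 * ((\<Sum>p\<in>A. BA p r k) + (\<Sum>p\<in>B. BB p r k)) + r * inverse (real (Suc k))) \<longlonglongrightarrow> 0"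
    by simp
qed

lemma finite_Jpairs: "finite (Jpairs nu ny q1 q2)"
proof -
  have "Jpairs nu ny q1 q2 \<subseteq> Pow {..<nu} \<times> Pow {..<ny}" unfolding Jpairs_def by auto
  then show ?thesis by (rule finite_subset) auto
qed

lemma finite_Spairs: "finite (Spairs nu ny q1 q2)"
proof -
  have "Spairs nu ny q1 q2 \<subseteq> Pow {..<nu} \<times> Pow {..<ny}" unfolding Spairs_def by auto
  then show ?thesis by (rule finite_subset) auto
qed

theorem theorem2:
  fixes f :: "'x::euclidean_space \<Rightarrow> 'x" and h :: "'x \<Rightarrow> nat \<Rightarrow> real"
    and b :: "nat \<Rightarrow> 'x" and nu ny q1 q2 :: nat
    and obsJ obsS :: "nat set \<Rightarrow> nat set \<Rightarrow> 'x obs_map"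
  assumes rankB: "full_col_rank b nu"
    and q_exist: "\<forall>Ju Js. Ju \<subseteq> {..<nu} \<and> card Ju \<le> 2 * q1 \<and> Js \<subseteq> {..<ny} \<and> card Js \<ge> ny - 2 * q2
                    \<longrightarrow> (\<exists>F. partial_UIO f h b nu Ju Js F)"
    and q1_lt: "2 * q1 < nu" and q2_lt: "2 * q2 < ny"
    and obsJ_UIO: "\<forall>(Ju, Js) \<in> Jpairs nu ny q1 q2. partial_UIO f h b nu Ju Js (obsJ Ju Js)"
    and obsS_UIO: "\<forall>(Su, Ss) \<in> Spairs nu ny q1 q2. partial_UIO f h b nu Su Ss (obsS Su Ss)"
  shows "\<exists>\<beta>b. class_KL \<beta>b \<and>
    (\<forall>x u au ay xJ0 xS0 \<sigma>.
      system_traj f b nu x u au \<longrightarrow>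
      card (Wset nu au) \<le> q1 \<longrightarrow> card (Wset ny ay) \<le> q2 \<longrightarrow>
      (let y = sys_output h x ay;
           xJ = (\<lambda>Ju Js. run_obs (obsJ Ju Js) (xJ0 Ju Js) u y Js);
           xS = (\<lambda>Su Ss. run_obs (obsS Su Ss) (xS0 Su Ss) u y Ss);
           e0 = Max ((\<lambda>(Ju, Js). norm (xJ0 Ju Js - x 0)) ` Jpairs nu ny q1 q2
                     \<union> (\<lambda>(Su, Ss). norm (xS0 Su Ss - x 0)) ` Spairs nu ny q1 q2)
       in (\<forall>k. \<sigma> k \<in> Jpairs nu ny q1 q2 \<and>
               (\<forall>(Ju, Js) \<in> Jpairs nu ny q1 q2.
                  pi_J xJ xS nu ny q1 q2 (fst (\<sigma> k)) (snd (\<sigma> k)) k \<le> pi_J xJ xS nu ny q1 q2 Ju Js k))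
          \<longrightarrow> (\<forall>k. norm (xJ (fst (\<sigma> k)) (snd (\<sigma> k)) k - x k) \<le> \<beta>b e0 k)))"
  proof -
  let ?JP = "Jpairs nu ny q1 q2" and ?SP = "Spairs nu ny q1 q2"
  have "\<forall>p\<in>?JP. \<exists>\<beta>. class_KL \<beta> \<and> (\<forall>x u au ay x0. system_traj f b nu x u au \<longrightarrow> Wset nu au \<subseteq> fst p \<longrightarrow>
          (\<forall>k. \<forall>i\<in>snd p. ay k i = 0) \<longrightarrow>
          (\<forall>k. norm (run_obs (obsJ (fst p) (snd p)) x0 u (sys_output h x ay) (snd p) k - x k) \<le> \<beta> (norm (x0 - x 0)) k))"
    using obsJ_UIO unfolding partial_UIO_def by auto
  then obtain BJ where BJ: "\<forall>p\<in>?JP. class_KL (BJ p) \<and> (\<forall>x u au ay x0. system_traj f b nu x u au \<longrightarrow> Wset nu au \<subseteq> fst p \<longrightarrow>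
          (\<forall>k. \<forall>i\<in>snd p. ay k i = 0) \<longrightarrow>
          (\<forall>k. norm (run_obs (obsJ (fst p) (snd p)) x0 u (sys_output h x ay) (snd p) k - x k) \<le> BJ p (norm (x0 - x 0)) k))"
    by (rule bchoice[THEN exE]) blast
  have "\<forall>p\<in>?SP. \<exists>\<beta>. class_KL \<beta> \<and> (\<forall>x u au ay x0. system_traj f b nu x u au \<longrightarrow> Wset nu au \<subseteq> fst p \<longrightarrow>
          (\<forall>k. \<forall>i\<in>snd p. ay k i = 0) \<longrightarrow>
          (\<forall>k. norm (run_obs (obsS (fst p) (snd p)) x0 u (sys_output h x ay) (snd p) k - x k) \<le> \<beta> (norm (x0 - x 0)) k))"
    using obsS_UIO unfolding partial_UIO_def by auto
  then obtain BS where BS: "\<forall>p\<in>?SP. class_KL (BS p) \<and> (\<forall>x u au ay x0. system_traj f b nu x u au \<longrightarrow> Wset nu au \<subseteq> fst p \<longrightarrow>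
          (\<forall>k. \<forall>i\<in>snd p. ay k i = 0) \<longrightarrow>
          (\<forall>k. norm (run_obs (obsS (fst p) (snd p)) x0 u (sys_output h x ay) (snd p) k - x k) \<le> BS p (norm (x0 - x 0)) k))"
    by (rule bchoice[THEN exE]) blast
  define Bb where "Bb = (\<lambda>r k. 3 * ((\<Sum>p\<in>?JP. BJ p r k) + (\<Sum>p\<in>?SP. BS p r k)) + r * inverse (real (Suc k)))"
  have KLb: "class_KL Bb" unfolding Bb_def
    using BJ BS by (intro KL_sum finite_Jpairs finite_Spairs) auto
  show ?thesis
  proof (intro exI[of _ Bb] conjI KLb allI impI)
    fix x u au ay xJ0 xS0 and \<sigma> :: "nat \<Rightarrow> nat set \<times> nat set"
    assume traj: "system_traj f b nu x u au" and cu: "card (Wset nu au) \<le> q1"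
      and cy: "card (Wset ny ay) \<le> q2"
    define y where "y = sys_output h x ay"
    define xJ where "xJ = (\<lambda>Ju Js. run_obs (obsJ Ju Js) (xJ0 Ju Js) u y Js)"
    define xS where "xS = (\<lambda>Su Ss. run_obs (obsS Su Ss) (xS0 Su Ss) u y Ss)"
    define e0 where "e0 = Max ((\<lambda>(Ju, Js). norm (xJ0 Ju Js - x 0)) ` ?JP
                     \<union> (\<lambda>(Su, Ss). norm (xS0 Su Ss - x 0)) ` ?SP)"
    define Wu where "Wu = Wset nu au"
    define Wy where "Wy = Wset ny ay"
    have Wu_sub: "Wu \<subseteq> {..<nu}" unfolding Wu_def Wset_def by auto
    have Wy_sub: "Wy \<subseteq> {..<ny}" unfolding Wy_def Wset_def by auto
    have Wy_zero: "\<And>k i. i \<in> {..<ny} - Wy \<Longrightarrow> ay k i = 0" unfolding Wy_def Wset_def by auto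
    have finE: "finite ((\<lambda>(Ju, Js). norm (xJ0 Ju Js - x 0)) ` ?JP
                     \<union> (\<lambda>(Su, Ss). norm (xS0 Su Ss - x 0)) ` ?SP)"
      using finite_Jpairs finite_Spairs by blast
    obtain Ja where Ja: "Wu \<subseteq> Ja" "Ja \<subseteq> {..<nu}" "card Ja = q1"
      using extend_card[of "{..<nu}" Wu q1] Wu_sub cu q1_lt unfolding Wu_def by auto
    have cWy: "card ({..<ny} - Wy) = ny - card Wy"
      using Wy_sub by (simp add: card_Diff_subset finite_subset)
    have "ny - q2 \<le> card ({..<ny} - Wy)" using cWy cy unfolding Wy_def by linarith
    then obtain Jb where Jb: "Jb \<subseteq> {..<ny} - Wy" "card Jb = ny - q2"
      by (rule obtain_subset_with_card_n)
    have JabP: "(Ja, Jb) \<in> ?JP" using Ja Jb unfolding Jpairs_def by auto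
    have e0_nonneg: "0 \<le> e0"
    proof -
      have "norm (xJ0 Ja Jb - x 0) \<in> ((\<lambda>(Ju, Js). norm (xJ0 Ju Js - x 0)) ` ?JP
                     \<union> (\<lambda>(Su, Ss). norm (xS0 Su Ss - x 0)) ` ?SP)" using JabP by force
      then have "norm (xJ0 Ja Jb - x 0) \<le> e0" unfolding e0_def using finE by (rule Max_ge[rotated])
      then show ?thesis by (meson norm_ge_zero order_trans)
    qed
    have main: "(\<forall>k. \<sigma> k \<in> ?JP \<and>
               (\<forall>(Ju, Js) \<in> ?JP. pi_J xJ xS nu ny q1 q2 (fst (\<sigma> k)) (snd (\<sigma> k)) k \<le> pi_J xJ xS nu ny q1 q2 Ju Js k))
        \<longrightarrow> (\<forall>k. norm (xJ (fst (\<sigma> k)) (snd (\<sigma> k)) k - x k) \<le> Bb e0 k)"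
    proof (intro impI allI)
    fix k
    define M where "M = (\<Sum>p\<in>?JP. BJ p e0 k) + (\<Sum>p\<in>?SP. BS p e0 k)"
    have sJ_nonneg: "0 \<le> (\<Sum>p\<in>?JP. BJ p e0 k)"
      using BJ KL_nonneg e0_nonneg by (intro sum_nonneg) blast
    have sS_nonneg: "0 \<le> (\<Sum>p\<in>?SP. BS p e0 k)"
      using BS KL_nonneg e0_nonneg by (intro sum_nonneg) blast
    have trueJ: "norm (xJ Ju Js k - x k) \<le> M"
      if P: "(Ju, Js) \<in> ?JP" and W1: "Wu \<subseteq> Ju" and W2: "Js \<subseteq> {..<ny} - Wy" for Ju Js
    proof -
      have KL: "class_KL (BJ (Ju, Js))" using BJ P by blast
      have H: "system_traj f b nu x u au \<longrightarrow> Wset nu au \<subseteq> Ju \<longrightarrow> (\<forall>k. \<forall>i\<in>Js. ay k i = 0) \<longrightarrow>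
          (\<forall>k. norm (run_obs (obsJ Ju Js) (xJ0 Ju Js) u (sys_output h x ay) Js k - x k) \<le> BJ (Ju, Js) (norm (xJ0 Ju Js - x 0)) k)"
        using bspec[OF BJ P] by simp
      have z: "\<forall>k. \<forall>i\<in>Js. ay k i = 0" using W2 Wy_zero by blast
      have "norm (xJ Ju Js k - x k) \<le> BJ (Ju, Js) (norm (xJ0 Ju Js - x 0)) k"
        using H traj W1 z unfolding xJ_def y_def Wu_def by simp
      also have "\<dots> \<le> BJ (Ju, Js) e0 k"
      proof (rule KL_mono[OF KL norm_ge_zero])
        have "norm (xJ0 Ju Js - x 0) \<in> ((\<lambda>(Ju, Js). norm (xJ0 Ju Js - x 0)) ` ?JP
                     \<union> (\<lambda>(Su, Ss). norm (xS0 Su Ss - x 0)) ` ?SP)" using P by force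
        then show "norm (xJ0 Ju Js - x 0) \<le> e0" unfolding e0_def using finE by (rule Max_ge[rotated])
      qed
      also have "\<dots> \<le> (\<Sum>p\<in>?JP. BJ p e0 k)"
        using BJ KL_nonneg e0_nonneg P finite_Jpairs
        by (intro member_le_sum[where f="\<lambda>p. BJ p e0 k"]) blast+
      finally show ?thesis unfolding M_def using sS_nonneg by linarith
    qed
    have trueS: "norm (xS Su Ss k - x k) \<le> M"
      if P: "(Su, Ss) \<in> ?SP" and W1: "Wu \<subseteq> Su" and W2: "Ss \<subseteq> {..<ny} - Wy" for Su Ss
    proof -
      have KL: "class_KL (BS (Su, Ss))" using BS P by blast
      have H: "system_traj f b nu x u au \<longrightarrow> Wset nu au \<subseteq> Su \<longrightarrow> (\<forall>k. \<forall>i\<in>Ss. ay k i = 0) \<longrightarrow>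
          (\<forall>k. norm (run_obs (obsS Su Ss) (xS0 Su Ss) u (sys_output h x ay) Ss k - x k) \<le> BS (Su, Ss) (norm (xS0 Su Ss - x 0)) k)"
        using bspec[OF BS P] by simp
      have z: "\<forall>k. \<forall>i\<in>Ss. ay k i = 0" using W2 Wy_zero by blast
      have "norm (xS Su Ss k - x k) \<le> BS (Su, Ss) (norm (xS0 Su Ss - x 0)) k"
        using H traj W1 z unfolding xS_def y_def Wu_def by simp
      also have "\<dots> \<le> BS (Su, Ss) e0 k"
      proof (rule KL_mono[OF KL norm_ge_zero])
        have "norm (xS0 Su Ss - x 0) \<in> ((\<lambda>(Ju, Js). norm (xJ0 Ju Js - x 0)) ` ?JP
                     \<union> (\<lambda>(Su, Ss). norm (xS0 Su Ss - x 0)) ` ?SP)" using P by force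
        then show "norm (xS0 Su Ss - x 0) \<le> e0" unfolding e0_def using finE by (rule Max_ge[rotated])
      qed
      also have "\<dots> \<le> (\<Sum>p\<in>?SP. BS p e0 k)"
        using BS KL_nonneg e0_nonneg P finite_Spairs
        by (intro member_le_sum[where f="\<lambda>p. BS p e0 k"]) blast+
      finally show ?thesis unfolding M_def using sJ_nonneg by linarith
    qed
    have existsS: "\<exists>Su Ss. (Su, Ss) \<in> ?SP \<and> Ju \<subseteq> Su \<and> Ss \<subseteq> Js \<and> Wu \<subseteq> Su \<and> Ss \<subseteq> {..<ny} - Wy"
      if P: "(Ju, Js) \<in> ?JP" for Ju Js
    proof -
      have Ju: "Ju \<subseteq> {..<nu}" "card Ju = q1" and Js: "Js \<subseteq> {..<ny}" "card Js = ny - q2"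
        using P unfolding Jpairs_def by auto
      have fJu: "finite Ju" using Ju finite_subset by blast
      have fJa: "finite Ja" using Ja finite_subset by blast
      have "card (Ju \<union> Ja) \<le> 2 * q1" using card_Un_le[of Ju Ja] Ju Ja by linarith
      then obtain Su where Su: "Ju \<union> Ja \<subseteq> Su" "Su \<subseteq> {..<nu}" "card Su = 2 * q1"
        using extend_card[of "{..<nu}" "Ju \<union> Ja" "2 * q1"] Ju Ja q1_lt by auto
      have fJs: "finite Js" using Js finite_subset by blast
      have fJb: "finite Jb" using Jb finite_subset by blast
      have "card (Js \<union> Jb) + card (Js \<inter> Jb) = card Js + card Jb"
        using card_Un_Int[OF fJs fJb] by simp
      moreover have "card (Js \<union> Jb) \<le> ny" using Js Jb card_mono[of "{..<ny}" "Js \<union> Jb"] by auto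
      ultimately have "ny - 2 * q2 \<le> card (Js \<inter> Jb)" using Js Jb q2_lt by linarith
      then obtain Ss where Ss: "Ss \<subseteq> Js \<inter> Jb" "card Ss = ny - 2 * q2"
        by (rule obtain_subset_with_card_n)
      have "(Su, Ss) \<in> ?SP" using Su Ss Js unfolding Spairs_def by auto
      then show ?thesis using Su Ss Ja Jb by blast
    qed
    have finPi: "finite {norm (xJ Ju Js k - xS Su Ss k) | Su Ss.
            (Su, Ss) \<in> ?SP \<and> Ju \<subseteq> Su \<and> Ss \<subseteq> Js}" for Ju Js
    proof -
      have "{norm (xJ Ju Js k - xS Su Ss k) | Su Ss. (Su, Ss) \<in> ?SP \<and> Ju \<subseteq> Su \<and> Ss \<subseteq> Js}
          \<subseteq> (\<lambda>(Su, Ss). norm (xJ Ju Js k - xS Su Ss k)) ` ?SP" by auto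
      then show ?thesis using finite_Spairs finite_subset by blast
    qed
    assume sig: "\<forall>k. \<sigma> k \<in> ?JP \<and>
               (\<forall>(Ju, Js) \<in> ?JP. pi_J xJ xS nu ny q1 q2 (fst (\<sigma> k)) (snd (\<sigma> k)) k \<le> pi_J xJ xS nu ny q1 q2 Ju Js k)"
    obtain Ju Js where sk: "\<sigma> k = (Ju, Js)" by fastforce
    have PJ: "(Ju, Js) \<in> ?JP" using sig sk by metis
    from sig have "\<forall>(a, c)\<in>?JP. pi_J xJ xS nu ny q1 q2 (fst (\<sigma> k)) (snd (\<sigma> k)) k \<le> pi_J xJ xS nu ny q1 q2 a c k"
      by blast
    then have "pi_J xJ xS nu ny q1 q2 (fst (\<sigma> k)) (snd (\<sigma> k)) k \<le> pi_J xJ xS nu ny q1 q2 Ja Jb k"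
      using JabP by auto
    then have minJ: "pi_J xJ xS nu ny q1 q2 Ju Js k \<le> pi_J xJ xS nu ny q1 q2 Ja Jb k"
      using sk by simp
    have piJab: "pi_J xJ xS nu ny q1 q2 Ja Jb k \<le> 2 * M"
      unfolding pi_J_def
    proof (subst Max_le_iff[OF finPi])
      show "{norm (xJ Ja Jb k - xS Su Ss k) |Su Ss. (Su, Ss) \<in> ?SP \<and> Ja \<subseteq> Su \<and> Ss \<subseteq> Jb} \<noteq> {}"
        using existsS[OF JabP] by blast
      show "\<forall>a\<in>{norm (xJ Ja Jb k - xS Su Ss k) |Su Ss. (Su, Ss) \<in> ?SP \<and> Ja \<subseteq> Su \<and> Ss \<subseteq> Jb}. a \<le> 2 * M"
      proof (clarify)
        fix Su Ss assume S: "(Su, Ss) \<in> ?SP" "Ja \<subseteq> Su" "Ss \<subseteq> Jb"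
        have "norm (xJ Ja Jb k - xS Su Ss k) \<le> norm (xJ Ja Jb k - x k) + norm (xS Su Ss k - x k)"
          using norm_triangle_ineq4[of "xJ Ja Jb k - x k" "xS Su Ss k - x k"] by simp
        also have "\<dots> \<le> M + M"
          using trueJ[OF JabP Ja(1) Jb(1)] trueS[OF S(1)] S Ja(1) Jb(1) by (intro add_mono) auto
        finally show "norm (xJ Ja Jb k - xS Su Ss k) \<le> 2 * M" by simp
      qed
    qed
    obtain Su Ss where S: "(Su, Ss) \<in> ?SP" "Ju \<subseteq> Su" "Ss \<subseteq> Js" "Wu \<subseteq> Su" "Ss \<subseteq> {..<ny} - Wy"
      using existsS[OF PJ] by blast
    have "norm (xJ Ju Js k - xS Su Ss k) \<le> pi_J xJ xS nu ny q1 q2 Ju Js k"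
      unfolding pi_J_def using S by (intro Max_ge[OF finPi]) blast
    moreover have "norm (xJ Ju Js k - x k) \<le> norm (xJ Ju Js k - xS Su Ss k) + norm (xS Su Ss k - x k)"
      using norm_triangle_ineq[of "xJ Ju Js k - xS Su Ss k" "xS Su Ss k - x k"] by simp
    moreover have "norm (xS Su Ss k - x k) \<le> M" using trueS S by blast
    moreover have "0 \<le> e0 * inverse (real (Suc k))" using e0_nonneg by simp
    moreover have "Bb e0 k = 3 * M + e0 * inverse (real (Suc k))" unfolding Bb_def M_def by simp
    ultimately have "norm (xJ Ju Js k - x k) \<le> Bb e0 k" using minJ piJab by linarith
    then show "norm (xJ (fst (\<sigma> k)) (snd (\<sigma> k)) k - x k) \<le> Bb e0 k" using sk by simp
    qed
    show "let y = sys_output h x ay;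
           xJ = (\<lambda>Ju Js. run_obs (obsJ Ju Js) (xJ0 Ju Js) u y Js);
           xS = (\<lambda>Su Ss. run_obs (obsS Su Ss) (xS0 Su Ss) u y Ss);
           e0 = Max ((\<lambda>(Ju, Js). norm (xJ0 Ju Js - x 0)) ` Jpairs nu ny q1 q2
                     \<union> (\<lambda>(Su, Ss). norm (xS0 Su Ss - x 0)) ` Spairs nu ny q1 q2)
       in (\<forall>k. \<sigma> k \<in> Jpairs nu ny q1 q2 \<and>
               (\<forall>(Ju, Js) \<in> Jpairs nu ny q1 q2.
                  pi_J xJ xS nu ny q1 q2 (fst (\<sigma> k)) (snd (\<sigma> k)) k \<le> pi_J xJ xS nu ny q1 q2 Ju Js k))
          \<longrightarrow> (\<forall>k. norm (xJ (fst (\<sigma> k)) (snd (\<sigma> k)) k - x k) \<le> Bb e0 k)"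
      unfolding Let_def using main unfolding xJ_def xS_def y_def e0_def .
  qed
qed

end
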